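(* Let $W \in \mathbb{R}^{m \times D}$, let $k$ be a nonnegative integer with $k < D$ and $k < m$, and let $\mathbf{1} \in \mathbb{R}^D$ be the all-ones vector. Consider the function $$f(w_c, W_s, \Gamma) = \left\| W - w_c \mathbf{1}^{\top} - W_s \Gamma^{\top} \right\|_F^2$$ over all $w_c \in \mathbb{R}^m$, $W_s \in \mathbb{R}^{m \times k}$, $\Gamma \in \mathbb{R}^{D \times k}$ subject to the constraint $w_c \perp \mathrm{Span}(W_s)$ (the column span of $W_s$). Define: (1) $w_c := \frac{1}{D} W \mathbf{1}$; (2) $W_s := U_k \Sigma_k$ and $\Gamma := V_k$, where $U_k \Sigma_k V_k^{\top}$ is a top-$k$ truncated singular value decomposition of $W - w_c \mathbf{1}^{\top}$; (3) $M := w_c \mathbf{1}^{\top} + W_s \Gamma^{\top} \in \mathbb{R}^{m \times D}$, $v := (M^{+})^{\top} \mathbf{1} \in \mathbb{R}^m$ (where $M^+$ is the Moore–Penrose pseudoinverse of $M$), and $w_c^{\mathrm{new}} := v / \|v\|^2$; (4) $W_s^{\mathrm{new}} \in \mathbb{R}^{m\times k}$, $\Gamma^{\mathrm{new}} \in \mathbb{R}^{D \times k}$ any factorization with $W_s^{\mathrm{new}} (\Gamma^{\mathrm{new}})^{\top} = M - w_c^{\mathrm{new}} \mathbf{1}^{\top}$. Assume $M$ has rank $k+1$ (so that $v \neq 0$ and step (3) is well defined). Then $w_c^{\mathrm{new}} \perp \mathrm{Span}(W_s^{\mathrm{new}})$, and $(w_c^{\mathrm{new}}, W_s^{\mathrm{new}},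 \Gamma^{\mathrm{new}})$ is a minimizer of $f$ subject to the constraint $w_c \perp \mathrm{Span}(W_s)$; that is, the minimum of $f$ over the constraint set is attained and equals $\|W - M\|_F^2$.
   Context: $\|\cdot\|_F$ denotes the Frobenius norm. A top-$k$ truncated SVD of a matrix $A$ with SVD $A = U\Sigma V^{\top}$ (singular values in non-increasing order) is $U_k\Sigma_k V_k^{\top}$, where $U_k, V_k$ consist of the first $k$ columns of $U, V$ and $\Sigma_k$ is the leading $k\times k$ block of $\Sigma$. *)

theory Defs
  imports "Jordan_Normal_Form.DL_Rank"
begin

definition frob_sq :: "real mat \<Rightarrow> real" where
  "frob_sq A = (\<Sum>i<dim_row A. \<Sum>j<dim_col A. (A $$ (i,j))^2)"

definition ones_vec :: "nat \<Rightarrow> real vec" where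
  "ones_vec n = vec n (\<lambda>_. 1)"

definition outer :: "real vec \<Rightarrow> real vec \<Rightarrow> real mat" where
  "outer u v = mat (dim_vec u) (dim_vec v) (\<lambda>(i,j). u $ i * v $ j)"

definition col_span :: "real mat \<Rightarrow> real vec set" where
  "col_span A = {A *\<^sub>v y | y. y \<in> carrier_vec (dim_col A)}"

definition orth_to_span :: "real vec \<Rightarrow> real mat \<Rightarrow> bool" where
  "orth_to_span w A \<longleftrightarrow> (\<forall>x \<in> col_span A. w \<bullet> x = 0)"

definition orthogonal_sq :: "nat \<Rightarrow> real mat \<Rightarrow> bool" where
  "orthogonal_sq n Q \<longleftrightarrow> Q \<in> carrier_mat n n \<and> transpose_mat Q * Q = 1\<^sub>m n"

definition is_svd :: "real mat \<Rightarrow> real mat \<Rightarrow> real mat \<Rightarrow> real mat \<Rightarrow> bool" where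
  "is_svd A U S V \<longleftrightarrow>
     orthogonal_sq (dim_row A) U \<and> orthogonal_sq (dim_col A) V \<and>
     S \<in> carrier_mat (dim_row A) (dim_col A) \<and>
     (\<forall>i<dim_row A. \<forall>j<dim_col A. i \<noteq> j \<longrightarrow> S $$ (i,j) = 0) \<and>
     (\<forall>i<min (dim_row A) (dim_col A). S $$ (i,i) \<ge> 0) \<and>
     (\<forall>i j. i \<le> j \<longrightarrow> j < min (dim_row A) (dim_col A) \<longrightarrow> S $$ (j,j) \<le> S $$ (i,i)) \<and>
     A = U * S * transpose_mat V"

definition first_cols :: "nat \<Rightarrow> real mat \<Rightarrow> real mat" where
  "first_cols k A = mat (dim_row A) k (\<lambda>(i,j). A $$ (i,j))"

definition lead_block :: "nat \<Rightarrow> real mat \<Rightarrow> real mat" where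
  "lead_block k A = mat k k (\<lambda>(i,j). A $$ (i,j))"

definition is_pinv :: "real mat \<Rightarrow> real mat \<Rightarrow> bool" where
  "is_pinv M X \<longleftrightarrow> X \<in> carrier_mat (dim_col M) (dim_row M) \<and>
     M * X * M = M \<and> X * M * X = X \<and>
     transpose_mat (M * X) = M * X \<and> transpose_mat (X * M) = X * M"

definition pinv :: "real mat \<Rightarrow> real mat" where
  "pinv M = (THE X. is_pinv M X)"

definition obj :: "real mat \<Rightarrow> real vec \<Rightarrow> real mat \<Rightarrow> real mat \<Rightarrow> real" where
  "obj W wc Ws G = frob_sq (W - outer wc (ones_vec (dim_col W)) - Ws * transpose_mat G)"

definition mat_rank :: "real mat \<Rightarrow> nat" where
  "mat_rank A = vec_space.rank (dim_row A) A"

end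

theory Submission
  imports Defs
begin


definition orthn :: "nat \<Rightarrow> nat set \<Rightarrow> (nat \<Rightarrow> nat \<Rightarrow> real) \<Rightarrow> bool" where
  "orthn N K U \<longleftrightarrow> (\<forall>a\<in>K. \<forall>b\<in>K. (\<Sum>i<N. U i a * U i b) = (if a = b then 1 else 0))"

lemma orthn_sum_sq:
  assumes o: "orthn N K U" and fin: "finite K"
  shows "(\<Sum>i<N. (\<Sum>q\<in>K. f q * U i q)^2) = (\<Sum>q\<in>K. (f q)^2)"
proof -
  have "(\<Sum>i<N. (\<Sum>q\<in>K. f q * U i q)^2) = (\<Sum>i<N. \<Sum>q\<in>K. \<Sum>q'\<in>K. f q * f q' * (U i q * U i q'))"
    by (simp add: power2_eq_square sum_product mult_ac)
  also have "\<dots> = (\<Sum>q\<in>K. \<Sum>q'\<in>K. f q * f q' * (\<Sum>i<N. U i q * U i q'))"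
    by (simp add: sum.swap[of _ "{..<N}"] sum_distrib_left)
  also have "\<dots> = (\<Sum>q\<in>K. \<Sum>q'\<in>K. f q * f q' * (if q = q' then 1 else 0))"
    using o unfolding orthn_def by (intro sum.cong refl) simp
  also have "\<dots> = (\<Sum>q\<in>K. (f q)^2)"
    using fin by (simp add: power2_eq_square if_distrib sum.delta cong: if_cong)
  finally show ?thesis .
qed

lemma frob_svd_like:
  assumes oU: "orthn m K U" and oV: "orthn D K V" and fin: "finite K"
  shows "(\<Sum>i<m. \<Sum>j<D. (\<Sum>q\<in>K. s q * U i q * V j q)^2) = (\<Sum>q\<in>K. (s q)^2)"
proof -
  have "(\<Sum>i<m. \<Sum>j<D. (\<Sum>q\<in>K. s q * U i q * V j q)^2) = (\<Sum>i<m. \<Sum>q\<in>K. (s q * U i q)^2)"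
    using orthn_sum_sq[OF oV fin, of "\<lambda>q. s q * U _ q"] by simp
  also have "\<dots> = (\<Sum>q\<in>K. (s q)^2 * (\<Sum>i<m. U i q * U i q))"
    by (simp add: sum.swap[of _ "{..<m}"] sum_distrib_left power2_eq_square mult_ac)
  also have "\<dots> = (\<Sum>q\<in>K. (s q)^2)"
    using oU unfolding orthn_def by simp
  finally show ?thesis .
qed

lemma expand_res:
  assumes oQ: "orthn D {..<r} Q"
  shows "(\<Sum>j<D. (a j - (\<Sum>p<r. Q j p * z p))^2) =
     (\<Sum>j<D. (a j)^2) - 2 * (\<Sum>p<r. z p * (\<Sum>j<D. Q j p * a j)) + (\<Sum>p<r. (z p)^2)"
proof -
  have sq: "(\<Sum>j<D. (\<Sum>p<r. Q j p * z p)^2) = (\<Sum>p<r. (z p)^2)"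
    using orthn_sum_sq[OF oQ, of z] by (simp add: mult_ac)
  have cr: "(\<Sum>j<D. a j * (\<Sum>p<r. Q j p * z p)) = (\<Sum>p<r. z p * (\<Sum>j<D. Q j p * a j))"
    by (simp add: sum_distrib_left sum.swap[of _ "{..<D}"] mult_ac)
  have "(\<Sum>j<D. (a j - (\<Sum>p<r. Q j p * z p))^2) =
     (\<Sum>j<D. (a j)^2) - 2 * (\<Sum>j<D. a j * (\<Sum>p<r. Q j p * z p)) + (\<Sum>j<D. (\<Sum>p<r. Q j p * z p)^2)"
    by (simp add: power2_diff sum_subtractf sum.distrib sum_distrib_left mult_ac)
  then show ?thesis using sq cr by simp
qed

lemma res_lower:
  assumes oQ: "orthn D {..<r} Q"
  shows "(\<Sum>j<D. (a j - (\<Sum>p<r. Q j p * z p))^2) \<ge>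
     (\<Sum>j<D. (a j)^2) - (\<Sum>p<r. (\<Sum>j<D. Q j p * a j)^2)"
proof -
  have "(\<Sum>p<r. (\<Sum>j<D. Q j p * a j)^2) - 2 * (\<Sum>p<r. z p * (\<Sum>j<D. Q j p * a j)) + (\<Sum>p<r. (z p)^2)
     = (\<Sum>p<r. (z p - (\<Sum>j<D. Q j p * a j))^2)"
    by (simp add: power2_diff sum_subtractf sum.distrib sum_distrib_left mult_ac)
  also have "\<dots> \<ge> 0" by (simp add: sum_nonneg)
  finally show ?thesis unfolding expand_res[OF oQ] by linarith
qed

lemma bessel:
  assumes oQ: "orthn D {..<r} Q"
  shows "(\<Sum>p<r. (\<Sum>j<D. Q j p * a j)^2) \<le> (\<Sum>j<D. (a j)^2)"
proof -
  have "0 \<le> (\<Sum>j<D. (a j - (\<Sum>p<r. Q j p * (\<Sum>j<D. Q j p * a j)))^2)" by (simp add: sum_nonneg)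
  also have "\<dots> = (\<Sum>j<D. (a j)^2) - (\<Sum>p<r. (\<Sum>j<D. Q j p * a j)^2)"
    unfolding expand_res[OF oQ] by (simp add: power2_eq_square)
  finally show ?thesis by simp
qed

lemma orth_inner_w:
  assumes oQ: "orthn D {..<r} Q" and a: "a < r"
  shows "(\<Sum>j<D. Q j a * (y j - (\<Sum>p<r. Q j p * (\<Sum>j'<D. Q j' p * y j')))) = 0"
proof -
  have "(\<Sum>j<D. Q j a * (\<Sum>p<r. Q j p * (\<Sum>j'<D. Q j' p * y j')))
      = (\<Sum>p<r. (\<Sum>j<D. Q j a * Q j p) * (\<Sum>j'<D. Q j' p * y j'))"
  proof -
    have "(\<Sum>j<D. Q j a * (\<Sum>p<r. Q j p * (\<Sum>j'<D. Q j' p * y j')))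
       = (\<Sum>j<D. \<Sum>p<r. Q j a * Q j p * (\<Sum>j'<D. Q j' p * y j'))"
      by (simp add: sum_distrib_left mult.assoc)
    also have "\<dots> = (\<Sum>p<r. \<Sum>j<D. Q j a * Q j p * (\<Sum>j'<D. Q j' p * y j'))"
      by (rule sum.swap)
    also have "\<dots> = (\<Sum>p<r. (\<Sum>j<D. Q j a * Q j p) * (\<Sum>j'<D. Q j' p * y j'))"
      by (simp add: sum_distrib_right)
    finally show ?thesis .
  qed
  also have "\<dots> = (\<Sum>p<r. (if a = p then (\<Sum>j'<D. Q j' p * y j') else 0))"
    using oQ a unfolding orthn_def by (intro sum.cong refl) auto
  also have "\<dots> = (\<Sum>j<D. Q j a * y j)" using a by simp
  finally show ?thesis by (simp add: right_diff_distrib sum_subtractf)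
qed

lemma gram:
  fixes Y :: "nat \<Rightarrow> nat \<Rightarrow> real"
  shows "\<exists>r Q Z. r \<le> k \<and> orthn D {..<r} Q \<and> (\<forall>j<D. \<forall>l<k. Y j l = (\<Sum>p<r. Q j p * Z p l))"
proof (induction k)
  case 0
  show ?case by (rule exI[of _ 0]) (auto simp: orthn_def)
next
  case (Suc k)
  then obtain r Q Z where r: "r \<le> k" and oQ: "orthn D {..<r} Q"
    and rep: "\<forall>j<D. \<forall>l<k. Y j l = (\<Sum>p<r. Q j p * Z p l)" by blast
  define \<alpha> where "\<alpha> p = (\<Sum>j'<D. Q j' p * Y j' k)" for p
  define w where "w j = Y j k - (\<Sum>p<r. Q j p * \<alpha> p)" for j
  define \<nu> where "\<nu> = (\<Sum>j<D. (w j)^2)"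
  have ow: "(\<Sum>j<D. Q j a * w j) = 0" if "a < r" for a
    using orth_inner_w[OF oQ that, of "\<lambda>j. Y j k"] unfolding w_def \<alpha>_def by simp
  show ?case
  proof (cases "\<nu> = 0")
    case True
    have w0: "w j = 0" if "j < D" for j
    proof -
      have "\<forall>j\<in>{..<D}. (w j)^2 = 0" using True unfolding \<nu>_def
        by (subst sum_nonneg_eq_0_iff[symmetric]) auto
      then show ?thesis using that by auto
    qed
    define Z' where "Z' p l = (if l = k then \<alpha> p else Z p l)" for p l
    show ?thesis
    proof (intro exI conjI allI impI)
      show "r \<le> Suc k" using r by simp
      show "orthn D {..<r} Q" by fact
      fix j l assume j: "j < D" and l: "l < Suc k"
      show "Y j l = (\<Sum>p<r. Q j p * Z' p l)"
      proof (cases "l = k")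
        case True
        then show ?thesis using w0[OF j] unfolding Z'_def w_def by simp
      next
        case False
        then show ?thesis using rep j l unfolding Z'_def by simp
      qed
    qed
  next
    case False
    have \<nu>pos: "\<nu> > 0" proof -
      have "\<nu> \<ge> 0" unfolding \<nu>_def by (simp add: sum_nonneg)
      then show ?thesis using False by simp
    qed
    define n where "n = sqrt \<nu>"
    have npos: "n > 0" using \<nu>pos unfolding n_def by simp
    have n2: "n * n = \<nu>" unfolding n_def using \<nu>pos by simp
    define Q' where "Q' j p = (if p = r then w j / n else Q j p)" for j p
    define Z' where "Z' p l = (if p = r then (if l = k then n else 0) else (if l = k then \<alpha> p else Z p l))" for p l
    show ?thesis
    proof (intro exI conjI allI impI)
      show "Suc r \<le> Suc k" using r by simp
      show "orthn D {..<Suc r} Q'"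
        unfolding orthn_def
      proof (intro ballI)
        fix a b assume a: "a \<in> {..<Suc r}" and b: "b \<in> {..<Suc r}"
        show "(\<Sum>i<D. Q' i a * Q' i b) = (if a = b then 1 else 0)"
        proof (cases "a = r")
          case ar: True
          show ?thesis
          proof (cases "b = r")
            case True
            have "(\<Sum>i<D. w i / n * (w i / n)) = \<nu> / (n * n)"
              unfolding \<nu>_def by (simp add: power2_eq_square sum_divide_distrib)
            then show ?thesis using ar True n2 \<nu>pos unfolding Q'_def by simp
          next
            case False
            then have "b < r" using b by simp
            then have "(\<Sum>i<D. w i / n * Q i b) = 0"
              using ow[of b] by (simp add: sum_divide_distrib[symmetric] mult_ac)
            then show ?thesis using ar False unfolding Q'_def by simp
          qed
        next
          case anr: False
          then have a': "a < r" using a by simp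
          show ?thesis
          proof (cases "b = r")
            case True
            have "(\<Sum>i<D. Q i a * (w i / n)) = 0"
              using ow[OF a'] by (simp add: sum_divide_distrib[symmetric] mult_ac)
            then show ?thesis using anr True unfolding Q'_def by simp
          next
            case False
            then have "b < r" using b by simp
            then show ?thesis using anr False a' oQ unfolding Q'_def orthn_def by simp
          qed
        qed
      qed
      fix j l assume j: "j < D" and l: "l < Suc k"
      have split: "(\<Sum>p<Suc r. Q' j p * Z' p l) = (\<Sum>p<r. Q j p * Z' p l) + w j / n * Z' r l"
        unfolding Q'_def by (simp add: lessThan_Suc)
      have Zs: "(\<Sum>p<r. Q j p * Z' p l) = (\<Sum>p<r. Q j p * (if l = k then \<alpha> p else Z p l))"
        unfolding Z'_def by (intro sum.cong refl) auto
      show "Y j l = (\<Sum>p<Suc r. Q' j p * Z' p l)"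
      proof (cases "l = k")
        case True
        then show ?thesis unfolding split Zs using npos unfolding Z'_def w_def by simp
      next
        case False
        then show ?thesis unfolding split Zs using rep j l unfolding Z'_def by simp
      qed
    qed
  qed
qed

lemma rearr:
  fixes s c :: "nat \<Rightarrow> real"
  assumes nonneg: "\<And>q. q < n \<Longrightarrow> 0 \<le> s q"
    and mono: "\<And>i j. i \<le> j \<Longrightarrow> j < n \<Longrightarrow> s j \<le> s i"
    and c01: "\<And>q. q < n \<Longrightarrow> 0 \<le> c q \<and> c q \<le> 1"
    and csum: "(\<Sum>q<n. c q) \<le> real k"
  shows "(\<Sum>q\<in>{k..<n}. s q) \<le> (\<Sum>q<n. s q * (1 - c q))"
proof (cases "k < n")
  case False
  then have "{k..<n} = {}" by auto
  moreover have "0 \<le> (\<Sum>q<n. s q * (1 - c q))"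
    using nonneg c01 by (intro sum_nonneg) simp
  ultimately show ?thesis by simp
next
  case True
  define t where "t = s k"
  have un: "{..<n} = {..<k} \<union> {k..<n}" using True by auto
  have dis: "{..<k} \<inter> {k..<n} = {}" by auto
  have sp: "(\<Sum>q<n. f q) = (\<Sum>q<k. f q) + (\<Sum>q\<in>{k..<n}. f q)" for f :: "nat \<Rightarrow> real"
    unfolding un by (rule sum.union_disjoint) (use dis in auto)
  have a: "(\<Sum>q<k. t * (1 - c q)) \<le> (\<Sum>q<k. s q * (1 - c q))"
  proof (intro sum_mono)
    fix q assume "q \<in> {..<k}"
    then have "q < n" "q \<le> k" using True by auto
    then show "t * (1 - c q) \<le> s q * (1 - c q)"
      using mono[of q k] c01[of q] True unfolding t_def by (intro mult_right_mono) auto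
  qed
  have b: "(\<Sum>q\<in>{k..<n}. s q * c q) \<le> (\<Sum>q\<in>{k..<n}. t * c q)"
  proof (intro sum_mono)
    fix q assume "q \<in> {k..<n}"
    then have "q < n" "k \<le> q" by auto
    then show "s q * c q \<le> t * c q"
      using mono[of k q] c01[of q] unfolding t_def by (intro mult_right_mono) auto
  qed
  have t0: "0 \<le> t" using nonneg True unfolding t_def by simp
  have "(\<Sum>q<k. t * (1 - c q)) - (\<Sum>q\<in>{k..<n}. t * c q) = t * (real k - (\<Sum>q<n. c q))"
    unfolding sp[of c] by (simp add: sum_distrib_left[symmetric] sum_subtractf algebra_simps)
  also have "\<dots> \<ge> 0" using t0 csum by simp
  finally have c: "0 \<le> (\<Sum>q<k. t * (1 - c q)) - (\<Sum>q\<in>{k..<n}. t * c q)" .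
  have "(\<Sum>q<n. s q * (1 - c q)) - (\<Sum>q\<in>{k..<n}. s q)
      = (\<Sum>q<k. s q * (1 - c q)) - (\<Sum>q\<in>{k..<n}. s q * c q)"
    unfolding sp[of "\<lambda>q. s q * (1 - c q)"] by (simp add: algebra_simps sum_subtractf)
  then show ?thesis using a b c by linarith
qed

lemma centering:
  fixes x :: "nat \<Rightarrow> real"
  shows "(\<Sum>j<D. (x j - (\<Sum>j'<D. x j') / real D)^2) \<le> (\<Sum>j<D. (x j)^2)"
proof (cases "D = 0")
  case True then show ?thesis by simp
next
  case False
  define c where "c = (\<Sum>j'<D. x j') / real D"
  have sx: "(\<Sum>j<D. x j) = c * real D" unfolding c_def using False by simp
  have "(\<Sum>j<D. (x j - c)^2) = (\<Sum>j<D. (x j)^2) - 2 * c * (\<Sum>j<D. x j) + real D * c^2"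
    by (simp add: power2_diff sum_subtractf sum.distrib sum_distrib_left mult_ac)
  also have "\<dots> = (\<Sum>j<D. (x j)^2) - real D * c^2" unfolding sx by (simp add: power2_eq_square)
  also have "\<dots> \<le> (\<Sum>j<D. (x j)^2)" by simp
  finally show ?thesis unfolding c_def .
qed

lemma EY:
  fixes A X Y U V :: "nat \<Rightarrow> nat \<Rightarrow> real" and \<sigma> :: "nat \<Rightarrow> real"
  assumes oU: "orthn m {..<n} U" and oV: "orthn D {..<n} V"
    and oVr: "orthn D {..<D} (\<lambda>i a. V a i)" and nD: "n \<le> D"
    and snn: "\<And>q. q < n \<Longrightarrow> 0 \<le> \<sigma> q"
    and smono: "\<And>i j. i \<le> j \<Longrightarrow> j < n \<Longrightarrow> \<sigma> j \<le> \<sigma> i"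
    and Aeq: "\<And>i j. i < m \<Longrightarrow> j < D \<Longrightarrow> A i j = (\<Sum>q<n. \<sigma> q * U i q * V j q)"
  shows "(\<Sum>q\<in>{k..<n}. (\<sigma> q)^2) \<le> (\<Sum>i<m. \<Sum>j<D. (A i j - (\<Sum>l<k. X i l * Y j l))^2)"
proof -
  obtain r Q Z where r: "r \<le> k" and oQ: "orthn D {..<r} Q"
    and rep: "\<forall>j<D. \<forall>l<k. Y j l = (\<Sum>p<r. Q j p * Z p l)"
    using gram[of k D Y] by blast
  define \<xi> where "\<xi> i p = (\<Sum>l<k. X i l * Z p l)" for i p
  define T where "T q p = (\<Sum>j<D. Q j p * V j q)" for q p
  define c where "c q = (\<Sum>p<r. (T q p)^2)" for q
  have XY: "(\<Sum>l<k. X i l * Y j l) = (\<Sum>p<r. Q j p * \<xi> i p)" if "j < D" for i j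
  proof -
    have "(\<Sum>l<k. X i l * Y j l) = (\<Sum>l<k. \<Sum>p<r. Q j p * (X i l * Z p l))"
      using rep that by (simp add: sum_distrib_left mult_ac)
    also have "\<dots> = (\<Sum>p<r. \<Sum>l<k. Q j p * (X i l * Z p l))" by (rule sum.swap)
    also have "\<dots> = (\<Sum>p<r. Q j p * \<xi> i p)" unfolding \<xi>_def by (simp add: sum_distrib_left)
    finally show ?thesis .
  qed
  have QA: "(\<Sum>j<D. Q j p * A i j) = (\<Sum>q<n. (\<sigma> q * T q p) * U i q)" if "i < m" for i p
  proof -
    have "(\<Sum>j<D. Q j p * A i j) = (\<Sum>j<D. \<Sum>q<n. (\<sigma> q * U i q) * (Q j p * V j q))"
      using Aeq that by (simp add: sum_distrib_left mult_ac)
    also have "\<dots> = (\<Sum>q<n. \<Sum>j<D. (\<sigma> q * U i q) * (Q j p * V j q))" by (rule sum.swap)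
    also have "\<dots> = (\<Sum>q<n. (\<sigma> q * T q p) * U i q)" unfolding T_def
      by (simp add: sum_distrib_left mult_ac)
    finally show ?thesis .
  qed
  have row: "(\<Sum>j<D. (A i j)^2) - (\<Sum>p<r. (\<Sum>j<D. Q j p * A i j)^2)
      \<le> (\<Sum>j<D. (A i j - (\<Sum>l<k. X i l * Y j l))^2)" for i
  proof -
    have "(\<Sum>j<D. (A i j - (\<Sum>l<k. X i l * Y j l))^2) = (\<Sum>j<D. (A i j - (\<Sum>p<r. Q j p * \<xi> i p))^2)"
      using XY by (intro sum.cong refl) simp
    then show ?thesis using res_lower[OF oQ, of "A i" "\<xi> i"] by simp
  qed
  have fA: "(\<Sum>i<m. \<Sum>j<D. (A i j)^2) = (\<Sum>q<n. (\<sigma> q)^2)"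
  proof -
    have "(\<Sum>i<m. \<Sum>j<D. (A i j)^2) = (\<Sum>i<m. \<Sum>j<D. (\<Sum>q<n. \<sigma> q * U i q * V j q)^2)"
      using Aeq by (intro sum.cong refl) simp
    also have "\<dots> = (\<Sum>q<n. (\<sigma> q)^2)" by (rule frob_svd_like[OF oU oV]) simp
    finally show ?thesis .
  qed
  have fQA: "(\<Sum>i<m. \<Sum>p<r. (\<Sum>j<D. Q j p * A i j)^2) = (\<Sum>q<n. (\<sigma> q)^2 * c q)"
  proof -
    have "(\<Sum>i<m. \<Sum>p<r. (\<Sum>j<D. Q j p * A i j)^2) = (\<Sum>p<r. \<Sum>i<m. (\<Sum>q<n. (\<sigma> q * T q p) * U i q)^2)"
      by (subst sum.swap) (intro sum.cong refl, simp add: QA)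
    also have "\<dots> = (\<Sum>p<r. \<Sum>q<n. (\<sigma> q * T q p)^2)"
      by (intro sum.cong refl orthn_sum_sq[OF oU]) simp
    also have "\<dots> = (\<Sum>q<n. (\<sigma> q)^2 * c q)"
      unfolding c_def by (subst sum.swap) (simp add: sum_distrib_left power_mult_distrib)
    finally show ?thesis .
  qed
  have c01: "0 \<le> c q \<and> c q \<le> 1" if "q < n" for q
  proof
    show "0 \<le> c q" unfolding c_def by (simp add: sum_nonneg)
    have "c q \<le> (\<Sum>j<D. (V j q)^2)" unfolding c_def T_def by (rule bessel[OF oQ])
    also have "\<dots> = 1" using oV that unfolding orthn_def by (simp add: power2_eq_square)
    finally show "c q \<le> 1" .
  qed
  have csum: "(\<Sum>q<n. c q) \<le> real k"
  proof -
    have "(\<Sum>q<n. c q) \<le> (\<Sum>q<D. c q)"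
      using nD by (intro sum_mono2) (auto simp: c_def sum_nonneg)
    also have "\<dots> = (\<Sum>p<r. \<Sum>q<D. (\<Sum>j<D. Q j p * V j q)^2)"
      unfolding c_def T_def by (rule sum.swap)
    also have "\<dots> = (\<Sum>p<r. \<Sum>j<D. (Q j p)^2)"
      by (intro sum.cong refl orthn_sum_sq[OF oVr]) simp
    also have "\<dots> = (\<Sum>p<r. 1)"
      using oQ unfolding orthn_def by (intro sum.cong refl) (simp add: power2_eq_square)
    also have "\<dots> = real r" by simp
    finally show ?thesis using r by simp
  qed
  have "(\<Sum>q\<in>{k..<n}. (\<sigma> q)^2) \<le> (\<Sum>q<n. (\<sigma> q)^2 * (1 - c q))"
  proof (rule rearr[OF _ _ c01 csum])
    show "0 \<le> (\<sigma> q)^2" for q by simp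
    fix i j assume "i \<le> j" "j < n"
    then show "(\<sigma> j)^2 \<le> (\<sigma> i)^2" using smono snn by (intro power_mono) auto
  qed
  also have "\<dots> = (\<Sum>i<m. \<Sum>j<D. (A i j)^2) - (\<Sum>i<m. \<Sum>p<r. (\<Sum>j<D. Q j p * A i j)^2)"
    unfolding fA fQA by (simp add: algebra_simps sum_subtractf)
  also have "\<dots> \<le> (\<Sum>i<m. \<Sum>j<D. (A i j - (\<Sum>l<k. X i l * Y j l))^2)"
    unfolding sum_subtractf[symmetric] by (intro sum_mono row)
  finally show ?thesis .
qed

lemma lower_bound_fl:
  fixes W X Y U V :: "nat \<Rightarrow> nat \<Rightarrow> real" and \<sigma> w :: "nat \<Rightarrow> real"
  assumes oU: "orthn m {..<n} U" and oV: "orthn D {..<n} V"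
    and oVr: "orthn D {..<D} (\<lambda>i a. V a i)" and nD: "n \<le> D" and Dpos: "0 < D"
    and snn: "\<And>q. q < n \<Longrightarrow> 0 \<le> \<sigma> q"
    and smono: "\<And>i j. i \<le> j \<Longrightarrow> j < n \<Longrightarrow> \<sigma> j \<le> \<sigma> i"
    and Weq: "\<And>i j. i < m \<Longrightarrow> j < D \<Longrightarrow> W i j - (\<Sum>j'<D. W i j') / real D = (\<Sum>q<n. \<sigma> q * U i q * V j q)"
  shows "(\<Sum>q\<in>{k..<n}. (\<sigma> q)^2) \<le> (\<Sum>i<m. \<Sum>j<D. (W i j - w i - (\<Sum>l<k. X i l * Y j l))^2)"
proof -
  define A where "A i j = W i j - (\<Sum>j'<D. W i j') / real D" for i j
  define Y' where "Y' j l = Y j l - (\<Sum>j'<D. Y j' l) / real D" for j l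
  define R where "R i j = W i j - w i - (\<Sum>l<k. X i l * Y j l)" for i j
  have "(\<Sum>q\<in>{k..<n}. (\<sigma> q)^2) \<le> (\<Sum>i<m. \<Sum>j<D. (A i j - (\<Sum>l<k. X i l * Y' j l))^2)"
    by (rule EY[OF oU oV oVr nD snn smono]) (use Weq in \<open>auto simp: A_def\<close>)
  also have "\<dots> \<le> (\<Sum>i<m. \<Sum>j<D. (R i j)^2)"
  proof (rule sum_mono)
    fix i
    have sR: "(\<Sum>j'<D. R i j') / real D = (\<Sum>j'<D. W i j') / real D - w i - (\<Sum>l<k. X i l * ((\<Sum>j'<D. Y j' l) / real D))"
    proof -
      have "(\<Sum>j'<D. R i j') = (\<Sum>j'<D. W i j') - real D * w i - (\<Sum>j'<D. \<Sum>l<k. X i l * Y j' l)"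
        unfolding R_def by (simp add: sum_subtractf)
      also have "(\<Sum>j'<D. \<Sum>l<k. X i l * Y j' l) = (\<Sum>l<k. X i l * (\<Sum>j'<D. Y j' l))"
        by (subst sum.swap) (simp add: sum_distrib_left)
      finally have "(\<Sum>j'<D. R i j') = (\<Sum>j'<D. W i j') - real D * w i - (\<Sum>l<k. X i l * (\<Sum>j'<D. Y j' l))" .
      then have "(\<Sum>j'<D. R i j') / real D = (\<Sum>j'<D. W i j') / real D - w i - (\<Sum>l<k. X i l * (\<Sum>j'<D. Y j' l)) / real D"
        using Dpos by (simp add: diff_divide_distrib)
      moreover have "(\<Sum>l<k. X i l * (\<Sum>j'<D. Y j' l)) / real D = (\<Sum>l<k. X i l * ((\<Sum>j'<D. Y j' l) / real D))"
        by (subst sum_divide_distrib) (simp add: times_divide_eq_right)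
      ultimately show ?thesis by simp
    qed
    have "(\<Sum>j<D. (A i j - (\<Sum>l<k. X i l * Y' j l))^2) = (\<Sum>j<D. (R i j - (\<Sum>j'<D. R i j') / real D)^2)"
    proof (intro sum.cong refl)
      fix j
      have "(\<Sum>l<k. X i l * Y' j l) = (\<Sum>l<k. X i l * Y j l) - (\<Sum>l<k. X i l * ((\<Sum>j'<D. Y j' l) / real D))" (is ?P)
        unfolding Y'_def by (simp add: right_diff_distrib sum_subtractf)
      then show "(A i j - (\<Sum>l<k. X i l * Y' j l))^2 = (R i j - (\<Sum>j'<D. R i j') / real D)^2"
      proof -
        assume h: ?P
        have "A i j - (\<Sum>l<k. X i l * Y' j l) = R i j - (\<Sum>j'<D. R i j') / real D"
          using h sR R_def[of i j] A_def[of i j] by linarith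
        then show ?thesis by simp
      qed
    qed
    also have "\<dots> \<le> (\<Sum>j<D. (R i j)^2)" by (rule centering)
    finally show "(\<Sum>j<D. (A i j - (\<Sum>l<k. X i l * Y' j l))^2) \<le> (\<Sum>j<D. (R i j)^2)" .
  qed
  finally show ?thesis by (simp add: R_def)
qed




lemma mult_entry:
  assumes "A \<in> carrier_mat a b" "B \<in> carrier_mat b c" "i < a" "j < c"
  shows "(A * B) $$ (i,j) = (\<Sum>l<b. A $$ (i,l) * B $$ (l,j))"
  using assms by (simp add: scalar_prod_def atLeast0LessThan)

lemma mult_vec_entry:
  assumes "A \<in> carrier_mat a b" "v \<in> carrier_vec b" "i < a"
  shows "(A *\<^sub>v v) $ i = (\<Sum>l<b. A $$ (i,l) * v $ l)"
  using assms by (simp add: scalar_prod_def atLeast0LessThan)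

lemma ones_vec_simps[simp]: "dim_vec (ones_vec n) = n" "j < n \<Longrightarrow> ones_vec n $ j = 1"
  "ones_vec n \<in> carrier_vec n"
  by (auto simp: ones_vec_def)

lemma outer_simps[simp]: "dim_row (outer u v) = dim_vec u" "dim_col (outer u v) = dim_vec v"
  "i < dim_vec u \<Longrightarrow> j < dim_vec v \<Longrightarrow> outer u v $$ (i,j) = u $ i * v $ j"
  by (auto simp: outer_def)

lemma outer_carrier[simp]: "u \<in> carrier_vec m \<Longrightarrow> v \<in> carrier_vec n \<Longrightarrow> outer u v \<in> carrier_mat m n"
  by (auto simp: outer_def)

lemma frob_sq_entries:
  assumes "A \<in> carrier_mat m n" "\<And>i j. i < m \<Longrightarrow> j < n \<Longrightarrow> A $$ (i,j) = f i j"
  shows "frob_sq A = (\<Sum>i<m. \<Sum>j<n. (f i j)^2)"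
  using assms unfolding frob_sq_def by (auto intro!: sum.cong)

lemma orth_to_orthn:
  assumes "Q \<in> carrier_mat n r" "transpose_mat Q * Q = 1\<^sub>m r"
  shows "orthn n {..<r} (\<lambda>i j. Q $$ (i,j))"
  unfolding orthn_def
proof (intro ballI)
  fix a b assume a: "a \<in> {..<r}" and b: "b \<in> {..<r}"
  have "(transpose_mat Q * Q) $$ (a,b) = (\<Sum>i<n. transpose_mat Q $$ (a,i) * Q $$ (i,b))"
    using assms a b by (intro mult_entry) auto
  also have "\<dots> = (\<Sum>i<n. Q $$ (i,a) * Q $$ (i,b))"
    using assms a b by (intro sum.cong) auto
  finally show "(\<Sum>i<n. Q $$ (i,a) * Q $$ (i,b)) = (if a = b then 1 else 0)"
    using assms a b by simp
qed

lemma usv_entry: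
  fixes U S V :: "real mat"
  assumes U: "U \<in> carrier_mat m m" and S: "S \<in> carrier_mat m D" and V: "V \<in> carrier_mat D D"
    and diag: "\<And>i j. i < m \<Longrightarrow> j < D \<Longrightarrow> i \<noteq> j \<Longrightarrow> S $$ (i,j) = 0"
    and i: "i < m" and j: "j < D"
  shows "(U * S * transpose_mat V) $$ (i,j) = (\<Sum>q<min m D. S $$ (q,q) * U $$ (i,q) * V $$ (j,q))"
proof -
  have US: "(U * S) $$ (i,b) = (if b < m then U $$ (i,b) * S $$ (b,b) else 0)" if b: "b < D" for b
  proof -
    have "(U * S) $$ (i,b) = (\<Sum>a<m. U $$ (i,a) * S $$ (a,b))" using U S i b by (intro mult_entry)
    also have "\<dots> = (\<Sum>a<m. if a = b then U $$ (i,b) * S $$ (b,b) else 0)"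
      using diag b by (intro sum.cong) auto
    also have "\<dots> = (if b < m then U $$ (i,b) * S $$ (b,b) else 0)" by simp
    finally show ?thesis .
  qed
  have "(U * S * transpose_mat V) $$ (i,j) = (\<Sum>b<D. (U * S) $$ (i,b) * transpose_mat V $$ (b,j))"
    using U S V i j by (intro mult_entry[of _ m D]) auto
  also have "\<dots> = (\<Sum>b<D. if b < m then S $$ (b,b) * U $$ (i,b) * V $$ (j,b) else 0)"
    using V j US by (intro sum.cong) (auto simp: mult_ac)
  also have "\<dots> = (\<Sum>b\<in>{..<D} \<inter> {b. b < m}. S $$ (b,b) * U $$ (i,b) * V $$ (j,b))"
    by (simp add: sum.inter_restrict)
  also have "{..<D} \<inter> {b. b < m} = {..<min m D}" by auto
  finally show ?thesis .
qed

lemma trunc_entry: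
  fixes U S V :: "real mat"
  assumes U: "U \<in> carrier_mat m m" and S: "S \<in> carrier_mat m D" and V: "V \<in> carrier_mat D D"
    and diag: "\<And>i j. i < m \<Longrightarrow> j < D \<Longrightarrow> i \<noteq> j \<Longrightarrow> S $$ (i,j) = 0"
    and km: "k \<le> m" and kD: "k \<le> D" and i: "i < m" and j: "j < D"
  shows "(first_cols k U * lead_block k S * transpose_mat (first_cols k V)) $$ (i,j)
        = (\<Sum>q<k. S $$ (q,q) * U $$ (i,q) * V $$ (j,q))"
proof -
  have FU: "first_cols k U \<in> carrier_mat m k" using U by (simp add: first_cols_def)
  have LS: "lead_block k S \<in> carrier_mat k k" by (simp add: lead_block_def)
  have FV: "transpose_mat (first_cols k V) \<in> carrier_mat k D" using V by (simp add: first_cols_def)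
  have US: "(first_cols k U * lead_block k S) $$ (i,b) = U $$ (i,b) * S $$ (b,b)" if b: "b < k" for b
  proof -
    have "(first_cols k U * lead_block k S) $$ (i,b) = (\<Sum>a<k. first_cols k U $$ (i,a) * lead_block k S $$ (a,b))"
      using FU LS i b by (intro mult_entry) auto
    also have "\<dots> = (\<Sum>a<k. if a = b then U $$ (i,b) * S $$ (b,b) else 0)"
      using diag b km kD i U by (intro sum.cong) (auto simp: first_cols_def lead_block_def)
    also have "\<dots> = U $$ (i,b) * S $$ (b,b)" using b by simp
    finally show ?thesis .
  qed
  have "(first_cols k U * lead_block k S * transpose_mat (first_cols k V)) $$ (i,j)
      = (\<Sum>b<k. (first_cols k U * lead_block k S) $$ (i,b) * transpose_mat (first_cols k V) $$ (b,j))"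
    using FU LS FV i j by (intro mult_entry[of _ m k]) auto
  also have "\<dots> = (\<Sum>b<k. S $$ (b,b) * U $$ (i,b) * V $$ (j,b))"
    using US V j kD by (intro sum.cong) (auto simp: first_cols_def)
  finally show ?thesis .
qed

lemma rank_sum:
  fixes f g :: "nat \<Rightarrow> nat \<Rightarrow> real"
  assumes fin: "finite K"
  shows "A \<in> carrier_mat m D \<Longrightarrow> (\<And>i j. i < m \<Longrightarrow> j < D \<Longrightarrow> A $$ (i,j) = (\<Sum>q\<in>K. f q i * g q j))
    \<Longrightarrow> vec_space.rank m A \<le> card K"
  using fin
proof (induction K arbitrary: A rule: finite_induct)
  case empty
  then have "A = 0\<^sub>m m D" by (intro eq_matI) auto
  then show ?case using vec_space.rank_0I by simp
next
  case (insert x F)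
  define B where "B = mat m D (\<lambda>(i,j). \<Sum>q\<in>F. f q i * g q j)"
  define C where "C = mat m D (\<lambda>(i,j). f x i * g x j)"
  have B: "B \<in> carrier_mat m D" and C: "C \<in> carrier_mat m D" by (auto simp: B_def C_def)
  have "A = B + C" using insert by (intro eq_matI) (auto simp: B_def C_def)
  moreover have "vec_space.rank m B \<le> card F" using insert(3)[OF B] by (auto simp: B_def)
  moreover have "vec_space.rank m C \<le> 1"
    by (rule vec_space.rank_le_1_product_entries[OF C]) (auto simp: C_def)
  moreover have "vec_space.rank m (B + C) \<le> vec_space.rank m B + vec_space.rank m C"
    by (rule vec_space.rank_subadditive[OF B C])
  ultimately show ?case using insert by simp
qed

lemma rank_dep:
  fixes f g :: "nat \<Rightarrow> nat \<Rightarrow> real" and x :: "nat \<Rightarrow> real"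
  assumes fin: "finite K" and A: "A \<in> carrier_mat m D"
    and Aeq: "\<And>i j. i < m \<Longrightarrow> j < D \<Longrightarrow> A $$ (i,j) = (\<Sum>q\<in>K. f q i * g q j)"
    and dep: "\<And>j. j < D \<Longrightarrow> (\<Sum>q\<in>K. x q * g q j) = 0"
    and p: "p \<in> K" "x p \<noteq> 0"
  shows "vec_space.rank m A \<le> card K - 1"
proof -
  have gp: "g p j = - (\<Sum>q\<in>K-{p}. x q * g q j) / x p" if "j < D" for j
  proof -
    have "x p * g p j + (\<Sum>q\<in>K-{p}. x q * g q j) = 0"
      using dep[OF that] sum.remove[OF fin p(1), of "\<lambda>q. x q * g q j"] by simp
    then show ?thesis using p(2) by (simp add: field_simps)
  qed
  have "vec_space.rank m A \<le> card (K - {p})"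
  proof (rule rank_sum[OF _ A, of _ "\<lambda>q i. f q i - x q / x p * f p i" g])
    show "finite (K - {p})" using fin by simp
    fix i j assume i: "i < m" and j: "j < D"
    have "A $$ (i,j) = f p i * g p j + (\<Sum>q\<in>K-{p}. f q i * g q j)"
      using Aeq[OF i j] sum.remove[OF fin p(1)] by simp
    also have "\<dots> = (\<Sum>q\<in>K-{p}. (f q i - x q / x p * f p i) * g q j)"
    proof -
      have "(\<Sum>q\<in>K-{p}. (f q i - x q / x p * f p i) * g q j)
          = (\<Sum>q\<in>K-{p}. f q i * g q j - f p i / x p * (x q * g q j))"
        by (intro sum.cong refl) (simp add: algebra_simps)
      also have "\<dots> = (\<Sum>q\<in>K-{p}. f q i * g q j) - f p i / x p * (\<Sum>q\<in>K-{p}. x q * g q j)"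
        by (simp add: sum_subtractf sum_distrib_left)
      finally show ?thesis unfolding gp[OF j] by simp
    qed
    finally show "A $$ (i,j) = (\<Sum>q\<in>K-{p}. (f q i - x q / x p * f p i) * g q j)" .
  qed
  then show ?thesis using fin p by simp
qed

lemma pinv_unique:
  fixes M X Y :: "real mat"
  assumes M: "M \<in> carrier_mat m D" and pX: "is_pinv M X" and pY: "is_pinv M Y"
  shows "X = Y"
proof -
  have X: "X \<in> carrier_mat D m" and Y: "Y \<in> carrier_mat D m" using pX pY M unfolding is_pinv_def by auto
  have tM: "transpose_mat M \<in> carrier_mat D m" and tX: "transpose_mat X \<in> carrier_mat m D"
    and tY: "transpose_mat Y \<in> carrier_mat m D" using M X Y by auto
  have X1: "M * (X * M) = M" and X2: "X * (M * X) = X"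
    using pX M X unfolding is_pinv_def by (auto simp: assoc_mult_mat[of _ m D _ m _ D] assoc_mult_mat[of _ D m _ D _ m])
  have Y1: "M * (Y * M) = M" and Y2: "Y * (M * Y) = Y"
    using pY M Y unfolding is_pinv_def by (auto simp: assoc_mult_mat[of _ m D _ m _ D] assoc_mult_mat[of _ D m _ D _ m])
  have sX1: "transpose_mat X * transpose_mat M = M * X" and sX2: "transpose_mat M * transpose_mat X = X * M"
    using pX M X unfolding is_pinv_def by (auto simp: transpose_mult[symmetric])
  have sY1: "transpose_mat Y * transpose_mat M = M * Y" and sY2: "transpose_mat M * transpose_mat Y = Y * M"
    using pY M Y unfolding is_pinv_def by (auto simp: transpose_mult[symmetric])
  have tMY: "transpose_mat M = transpose_mat M * (M * Y)"
  proof -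
    have "transpose_mat M = transpose_mat (M * (Y * M))" using Y1 by simp
    also have "\<dots> = transpose_mat (Y * M) * transpose_mat M" using M Y by (simp add: transpose_mult[of _ m D _ D])
    also have "\<dots> = (transpose_mat M * transpose_mat Y) * transpose_mat M" using M Y by (simp add: transpose_mult[of _ D m _ D])
    also have "\<dots> = transpose_mat M * (transpose_mat Y * transpose_mat M)" using M Y by simp
    finally show ?thesis unfolding sY1 .
  qed
  have tMX: "transpose_mat M = (X * M) * transpose_mat M"
  proof -
    have "transpose_mat M = transpose_mat (M * (X * M))" using X1 by simp
    also have "\<dots> = transpose_mat (X * M) * transpose_mat M" using M X by (simp add: transpose_mult[of _ m D _ D])
    also have "\<dots> = (transpose_mat M * transpose_mat X) * transpose_mat M" using M X by (simp add: transpose_mult[of _ D m _ D])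
    finally show ?thesis unfolding sX2 .
  qed
  have MX: "M * X \<in> carrier_mat m m" and MY: "M * Y \<in> carrier_mat m m"
    and XM: "X * M \<in> carrier_mat D D" and YM: "Y * M \<in> carrier_mat D D" using M X Y by auto
  have "X = X * (transpose_mat X * transpose_mat M)" using X2 sX1 by simp
  also have "\<dots> = X * (transpose_mat X * (transpose_mat M * (M * Y)))" using tMY by simp
  also have "\<dots> = X * ((transpose_mat X * transpose_mat M) * (M * Y))"
    using assoc_mult_mat[OF tX tM, of "M * Y" m] M Y by simp
  also have "\<dots> = (X * (M * X)) * (M * Y)" unfolding sX1 using assoc_mult_mat[OF X MX MY] by simp
  also have "\<dots> = X * (M * Y)" using X2 by simp
  finally have eX: "X = X * (M * Y)" .
  have "Y = (Y * M) * Y" using Y2 assoc_mult_mat[OF Y M Y] by simp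
  also have "\<dots> = (transpose_mat M * transpose_mat Y) * Y" using sY2 by simp
  also have "\<dots> = (((X * M) * transpose_mat M) * transpose_mat Y) * Y" using tMX by simp
  also have "\<dots> = (X * M) * ((transpose_mat M * transpose_mat Y) * Y)"
    using assoc_mult_mat[OF XM tM tY] assoc_mult_mat[OF XM "mult_carrier_mat"[OF tM tY] Y]
      assoc_mult_mat[OF "mult_carrier_mat"[OF XM tM] tY Y] assoc_mult_mat[OF tM tY Y] by simp
  also have "\<dots> = (X * M) * ((Y * M) * Y)" unfolding sY2 ..
  also have "\<dots> = X * (M * Y)" using Y2 assoc_mult_mat[OF Y M Y] assoc_mult_mat[OF X M Y] by simp
  finally show ?thesis using eX by simp
qed

lemma pinv_fact:
  fixes Q R Gi :: "real mat"
  assumes Q: "Q \<in> carrier_mat m r" and R: "R \<in> carrier_mat D r" and Gi: "Gi \<in> carrier_mat r r"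
    and QQ: "transpose_mat Q * Q = 1\<^sub>m r"
    and GGi: "(transpose_mat R * R) * Gi = 1\<^sub>m r" and GiG: "Gi * (transpose_mat R * R) = 1\<^sub>m r"
  shows "is_pinv (Q * transpose_mat R) (R * Gi * transpose_mat Q)"
proof -
  have tQ: "transpose_mat Q \<in> carrier_mat r m" and tR: "transpose_mat R \<in> carrier_mat r D" using Q R by auto
  have RGi: "R * Gi \<in> carrier_mat D r" using R Gi by auto
  have X: "R * Gi * transpose_mat Q \<in> carrier_mat D m" using R Gi Q by auto
  have M: "Q * transpose_mat R \<in> carrier_mat m D" using Q R by auto
  have G: "transpose_mat R * R \<in> carrier_mat r r" using R by auto
  have tG: "transpose_mat (transpose_mat R * R) = transpose_mat R * R"
    using R by (simp add: transpose_mult[OF tR R])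
  have tGi: "transpose_mat Gi = Gi"
  proof -
    have "transpose_mat Gi * (transpose_mat R * R) = transpose_mat ((transpose_mat R * R) * Gi)"
      using transpose_mult[OF G Gi] tG by simp
    also have "\<dots> = 1\<^sub>m r" using GGi by simp
    finally have a: "transpose_mat Gi * (transpose_mat R * R) = 1\<^sub>m r" .
    have "transpose_mat Gi = transpose_mat Gi * ((transpose_mat R * R) * Gi)" using GGi Gi by simp
    also have "\<dots> = (transpose_mat Gi * (transpose_mat R * R)) * Gi"
      using assoc_mult_mat[of "transpose_mat Gi" r r, OF _ G Gi] Gi by simp
    also have "\<dots> = Gi" using a Gi by simp
    finally show ?thesis .
  qed
  have k1: "transpose_mat R * ((R * Gi) * transpose_mat Q) = transpose_mat Q"
  proof -
    have "transpose_mat R * ((R * Gi) * transpose_mat Q) = (transpose_mat R * (R * Gi)) * transpose_mat Q"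
      using assoc_mult_mat[OF tR RGi tQ] by simp
    also have "transpose_mat R * (R * Gi) = 1\<^sub>m r" using assoc_mult_mat[OF tR R Gi] GGi by simp
    finally show ?thesis using tQ by simp
  qed
  have k2: "transpose_mat Q * (Q * transpose_mat R) = transpose_mat R"
    using assoc_mult_mat[OF tQ Q tR] QQ tR by simp
  have MX: "(Q * transpose_mat R) * (R * Gi * transpose_mat Q) = Q * transpose_mat Q"
    using assoc_mult_mat[OF Q tR X] k1 by simp
  have XM: "(R * Gi * transpose_mat Q) * (Q * transpose_mat R) = (R * Gi) * transpose_mat R"
    using assoc_mult_mat[OF RGi tQ M] k2 by simp
  show ?thesis unfolding is_pinv_def
  proof (intro conjI)
    show "R * Gi * transpose_mat Q \<in> carrier_mat (dim_col (Q * transpose_mat R)) (dim_row (Q * transpose_mat R))"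
      using X Q R by simp
    show "Q * transpose_mat R * (R * Gi * transpose_mat Q) * (Q * transpose_mat R) = Q * transpose_mat R"
      unfolding MX using assoc_mult_mat[OF Q tQ M] k2 by simp
    show "R * Gi * transpose_mat Q * (Q * transpose_mat R) * (R * Gi * transpose_mat Q) = R * Gi * transpose_mat Q"
      unfolding XM using assoc_mult_mat[OF RGi tR X] k1 by simp
    show "transpose_mat (Q * transpose_mat R * (R * Gi * transpose_mat Q)) = Q * transpose_mat R * (R * Gi * transpose_mat Q)"
      unfolding MX using transpose_mult[OF Q tQ] by simp
    show "transpose_mat (R * Gi * transpose_mat Q * (Q * transpose_mat R)) = R * Gi * transpose_mat Q * (Q * transpose_mat R)"
      unfolding XM using transpose_mult[OF RGi tR] transpose_mult[OF R Gi] tGi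
        assoc_mult_mat[OF R Gi tR] by simp
  qed
qed

lemma self_prod_zero:
  fixes v :: "real vec"
  assumes "v \<bullet> v = 0"
  shows "v = 0\<^sub>v (dim_vec v)"
proof -
  have "\<forall>i\<in>{0..<dim_vec v}. v $ i * v $ i = 0"
    using assms unfolding scalar_prod_def by (subst sum_nonneg_eq_0_iff[symmetric]) auto
  then show ?thesis by (intro eq_vecI) auto
qed

lemma gram_inverse:
  fixes R :: "real mat"
  assumes R: "R \<in> carrier_mat D r"
    and inj: "\<And>x. x \<in> carrier_vec r \<Longrightarrow> R *\<^sub>v x = 0\<^sub>v D \<Longrightarrow> x = 0\<^sub>v r"
  shows "\<exists>Gi. Gi \<in> carrier_mat r r \<and> (transpose_mat R * R) * Gi = 1\<^sub>m r \<and> Gi * (transpose_mat R * R) = 1\<^sub>m r"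
proof -
  have G: "transpose_mat R * R \<in> carrier_mat r r" using R by auto
  have "det (transpose_mat R * R) \<noteq> 0"
  proof
    assume "det (transpose_mat R * R) = 0"
    then obtain x where x: "x \<in> carrier_vec r" "x \<noteq> 0\<^sub>v r" "(transpose_mat R * R) *\<^sub>v x = 0\<^sub>v r"
      using det_0_iff_vec_prod_zero_field[OF G] by auto
    have Rx: "R *\<^sub>v x \<in> carrier_vec D" using R x by auto
    have "transpose_mat R *\<^sub>v (R *\<^sub>v x) = 0\<^sub>v r" using assoc_mult_mat_vec[of "transpose_mat R" r D R r x] x R by simp
    then have "(transpose_mat R *\<^sub>v (R *\<^sub>v x)) \<bullet> x = 0" using x by simp
    then have "(R *\<^sub>v x) \<bullet> (R *\<^sub>v x) = 0" using transpose_vec_mult_scalar[OF R x(1) Rx] by simp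
    then have "R *\<^sub>v x = 0\<^sub>v D" using self_prod_zero[of "R *\<^sub>v x"] R by simp
    then show False using inj x by auto
  qed
  from det_non_zero_imp_unit[OF G this, of undefined]
  obtain Gi where "Gi \<in> carrier_mat r r" "(transpose_mat R * R) * Gi = 1\<^sub>m r" "Gi * (transpose_mat R * R) = 1\<^sub>m r"
    unfolding Units_def ring_mat_def by auto
  then show ?thesis by blast
qed

lemma M_pinv:
  fixes M :: "real mat" and wc :: "real vec" and U V :: "nat \<Rightarrow> nat \<Rightarrow> real" and \<sigma> :: "nat \<Rightarrow> real"
  assumes M: "M \<in> carrier_mat m D" and rk: "vec_space.rank m M = k + 1" and wc: "wc \<in> carrier_vec m"
    and oU: "orthn m {..<k} U"
    and Meq: "\<And>i j. i < m \<Longrightarrow> j < D \<Longrightarrow> M $$ (i,j) = wc $ i + (\<Sum>q<k. \<sigma> q * U i q * V j q)"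
  shows "is_pinv M (pinv M) \<and> (\<exists>z\<in>carrier_vec m. transpose_mat M *\<^sub>v z = ones_vec D)"
proof -
  define \<alpha> where "\<alpha> p = (\<Sum>i<m. U i p * wc $ i)" for p
  define w where "w i = wc $ i - (\<Sum>p<k. U i p * \<alpha> p)" for i
  define \<nu> where "\<nu> = (\<Sum>i<m. (w i)^2)"
  have wU: "(\<Sum>i<m. U i q * w i) = 0" if "q < k" for q
    using orth_inner_w[OF oU that, of "\<lambda>i. wc $ i"] unfolding w_def \<alpha>_def by simp
  have wwc: "(\<Sum>i<m. w i * wc $ i) = \<nu>"
  proof -
    have "(\<Sum>i<m. w i * wc $ i) = (\<Sum>i<m. w i * w i + w i * (\<Sum>p<k. U i p * \<alpha> p))"
      unfolding w_def by (intro sum.cong refl) (simp add: algebra_simps)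
    also have "\<dots> = \<nu> + (\<Sum>i<m. \<Sum>p<k. \<alpha> p * (U i p * w i))"
      unfolding \<nu>_def by (simp add: sum.distrib sum_distrib_left power2_eq_square mult_ac)
    also have "(\<Sum>i<m. \<Sum>p<k. \<alpha> p * (U i p * w i)) = (\<Sum>p<k. \<alpha> p * (\<Sum>i<m. U i p * w i))"
      by (subst sum.swap) (simp add: sum_distrib_left)
    also have "\<dots> = 0" using wU by simp
    finally show ?thesis by simp
  qed
  have Meq2: "M $$ (i,j) = (\<Sum>p<k. U i p * (\<alpha> p + \<sigma> p * V j p)) + w i" if "i < m" "j < D" for i j
    unfolding Meq[OF that] w_def by (simp add: sum.distrib algebra_simps)
  have \<nu>0: "\<nu> \<noteq> 0"
  proof
    assume "\<nu> = 0"
    then have "\<forall>i\<in>{..<m}. (w i)^2 = 0" unfolding \<nu>_def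
      by (subst sum_nonneg_eq_0_iff[symmetric]) auto
    then have "vec_space.rank m M \<le> card {..<k}"
      by (intro rank_sum[OF _ M, of _ "\<lambda>q i. U i q" "\<lambda>p j. \<alpha> p + \<sigma> p * V j p"]) (auto simp: Meq2)
    then show False using rk by simp
  qed
  have \<nu>pos: "\<nu> > 0"
  proof -
    have "\<nu> \<ge> 0" unfolding \<nu>_def by (simp add: sum_nonneg)
    then show ?thesis using \<nu>0 by simp
  qed
  define nn where "nn = sqrt \<nu>"
  have nnpos: "nn > 0" using \<nu>pos unfolding nn_def by simp
  have nn2: "nn * nn = \<nu>" using \<nu>pos unfolding nn_def by simp
  define Q where "Q = mat m (Suc k) (\<lambda>(i,p). if p < k then U i p else w i / nn)"
  define R where "R = mat D (Suc k) (\<lambda>(j,p). if p < k then \<alpha> p + \<sigma> p * V j p else nn)"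
  have Q: "Q \<in> carrier_mat m (Suc k)" and R: "R \<in> carrier_mat D (Suc k)" by (auto simp: Q_def R_def)
  have MQR_e: "M $$ (i,j) = (\<Sum>p<Suc k. Q $$ (i,p) * R $$ (j,p))" if "i < m" "j < D" for i j
  proof -
    have "(\<Sum>p<Suc k. Q $$ (i,p) * R $$ (j,p)) = (\<Sum>p<k. U i p * (\<alpha> p + \<sigma> p * V j p)) + w i / nn * nn"
      using that by (simp add: lessThan_Suc Q_def R_def)
    then show ?thesis using Meq2[OF that] nnpos by simp
  qed
  have MQR: "M = Q * transpose_mat R"
  proof (rule eq_matI)
    fix i j assume "i < dim_row (Q * transpose_mat R)" "j < dim_col (Q * transpose_mat R)"
    then have ij: "i < m" "j < D" using Q R by auto
    have "(Q * transpose_mat R) $$ (i,j) = (\<Sum>p<Suc k. Q $$ (i,p) * transpose_mat R $$ (p,j))"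
      using Q R ij by (intro mult_entry) auto
    also have "\<dots> = (\<Sum>p<Suc k. Q $$ (i,p) * R $$ (j,p))" using R ij by (intro sum.cong) auto
    finally show "M $$ (i,j) = (Q * transpose_mat R) $$ (i,j)" using MQR_e[OF ij] by simp
  qed (use M Q R in auto)
  have QQ: "transpose_mat Q * Q = 1\<^sub>m (Suc k)"
  proof (rule eq_matI)
    fix a b assume "a < dim_row (1\<^sub>m (Suc k) :: real mat)" "b < dim_col (1\<^sub>m (Suc k) :: real mat)"
    then have ab: "a < Suc k" "b < Suc k" by auto
    have "(transpose_mat Q * Q) $$ (a,b) = (\<Sum>i<m. transpose_mat Q $$ (a,i) * Q $$ (i,b))"
      using Q ab by (intro mult_entry) auto
    also have "\<dots> = (\<Sum>i<m. Q $$ (i,a) * Q $$ (i,b))" using Q ab by (intro sum.cong) auto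
    also have "\<dots> = (if a = b then 1 else 0)"
    proof (cases "a < k")
      case aT: True
      show ?thesis
      proof (cases "b < k")
        case True
        then show ?thesis using aT oU unfolding orthn_def by (simp add: Q_def)
      next
        case False
        then have "b = k" using ab by simp
        then have "(\<Sum>i<m. Q $$ (i,a) * Q $$ (i,b)) = (\<Sum>i<m. U i a * w i) / nn"
          using aT by (simp add: Q_def sum_divide_distrib)
        then show ?thesis using wU[OF aT] aT \<open>b = k\<close> by simp
      qed
    next
      case aF: False
      then have ak: "a = k" using ab by simp
      show ?thesis
      proof (cases "b < k")
        case True
        then have "(\<Sum>i<m. Q $$ (i,a) * Q $$ (i,b)) = (\<Sum>i<m. U i b * w i) / nn"
          using ak by (simp add: Q_def sum_divide_distrib mult_ac)
        then show ?thesis using wU[OF True] ak True by simp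
      next
        case False
        then have "b = k" using ab by simp
        then have "(\<Sum>i<m. Q $$ (i,a) * Q $$ (i,b)) = \<nu> / (nn * nn)"
          using ak unfolding \<nu>_def by (simp add: Q_def sum_divide_distrib power2_eq_square)
        then show ?thesis using ak \<open>b = k\<close> nn2 \<nu>0 by simp
      qed
    qed
    finally show "(transpose_mat Q * Q) $$ (a,b) = 1\<^sub>m (Suc k) $$ (a,b)" using ab by simp
  qed (use Q in auto)
  have Rinj: "x = 0\<^sub>v (Suc k)" if x: "x \<in> carrier_vec (Suc k)" and Rx: "R *\<^sub>v x = 0\<^sub>v D" for x
  proof (rule ccontr)
    assume nz: "x \<noteq> 0\<^sub>v (Suc k)"
    have "\<exists>p<Suc k. x $ p \<noteq> 0"
    proof (rule ccontr)
      assume "\<not> (\<exists>p<Suc k. x $ p \<noteq> 0)"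
      then have "x = 0\<^sub>v (Suc k)" using x by (intro eq_vecI) auto
      then show False using nz by simp
    qed
    then obtain p where p: "p < Suc k" "x $ p \<noteq> 0" by blast
    have "vec_space.rank m M \<le> card {..<Suc k} - 1"
    proof (rule rank_dep[OF _ M, of _ "\<lambda>p i. Q $$ (i,p)" "\<lambda>p j. R $$ (j,p)" "\<lambda>p. x $ p" p])
      fix j assume j: "j < D"
      have "(R *\<^sub>v x) $ j = (\<Sum>l<Suc k. R $$ (j,l) * x $ l)" using R x j by (intro mult_vec_entry)
      then show "(\<Sum>q\<in>{..<Suc k}. x $ q * R $$ (j,q)) = 0" using Rx j by (simp add: mult_ac)
    qed (use MQR_e p in auto)
    then show False using rk by simp
  qed
  obtain Gi where Gi: "Gi \<in> carrier_mat (Suc k) (Suc k)" "(transpose_mat R * R) * Gi = 1\<^sub>m (Suc k)"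
    "Gi * (transpose_mat R * R) = 1\<^sub>m (Suc k)"
    using gram_inverse[OF R Rinj] by blast
  have pX: "is_pinv M (R * Gi * transpose_mat Q)"
    unfolding MQR by (rule pinv_fact[OF Q R Gi(1) QQ Gi(2) Gi(3)])
  have "pinv M = R * Gi * transpose_mat Q"
    unfolding pinv_def by (rule the_equality[of "is_pinv M", OF pX]) (use pinv_unique[OF M] pX in blast)
  then have P: "is_pinv M (pinv M)" using pX by simp
  define z where "z = vec m (\<lambda>i. w i / \<nu>)"
  have z: "z \<in> carrier_vec m" by (simp add: z_def)
  have "transpose_mat M *\<^sub>v z = ones_vec D"
  proof (rule eq_vecI)
    fix j assume "j < dim_vec (ones_vec D)"
    then have j: "j < D" by simp
    have "(transpose_mat M *\<^sub>v z) $ j = (\<Sum>i<m. transpose_mat M $$ (j,i) * z $ i)"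
      using M z j by (intro mult_vec_entry) auto
    also have "\<dots> = (\<Sum>i<m. M $$ (i,j) * w i) / \<nu>"
      using M j by (simp add: z_def sum_divide_distrib)
    also have "(\<Sum>i<m. M $$ (i,j) * w i) = (\<Sum>i<m. (\<Sum>p<k. U i p * (\<alpha> p + \<sigma> p * V j p)) * w i) + \<nu>"
      using Meq2 j unfolding \<nu>_def by (simp add: algebra_simps sum.distrib power2_eq_square)
    also have "(\<Sum>i<m. (\<Sum>p<k. U i p * (\<alpha> p + \<sigma> p * V j p)) * w i)
        = (\<Sum>p<k. (\<alpha> p + \<sigma> p * V j p) * (\<Sum>i<m. U i p * w i))"
      by (simp add: sum_distrib_right sum_distrib_left sum.swap[of _ "{..<m}"] mult_ac)
    also have "\<dots> = 0" using wU by simp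
    finally show "(transpose_mat M *\<^sub>v z) $ j = ones_vec D $ j" using j \<nu>0 by simp
  qed (use M in simp)
  then show ?thesis using P z by blast
qed

lemma orth_new:
  fixes M Ws G :: "real mat" and z v wn :: "real vec"
  assumes M: "M \<in> carrier_mat m D" and Dpos: "0 < D" and rk: "vec_space.rank m M = k + 1"
    and P: "is_pinv M (pinv M)" and z: "z \<in> carrier_vec m" and Mz: "transpose_mat M *\<^sub>v z = ones_vec D"
    and Ws: "Ws \<in> carrier_mat m k" and G: "G \<in> carrier_mat D k"
    and v_def: "v = transpose_mat (pinv M) *\<^sub>v ones_vec D"
    and wn_def: "wn = (1 / (v \<bullet> v)) \<cdot>\<^sub>v v"
    and fact: "Ws * transpose_mat G = M - outer wn (ones_vec D)"
  shows "orth_to_span wn Ws \<and> wn \<in> carrier_vec m"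
proof -
  define Pm where "Pm = pinv M"
  have Pc: "Pm \<in> carrier_mat D m" using P M unfolding is_pinv_def Pm_def by auto
  have MPM: "M * Pm * M = M" using P unfolding is_pinv_def Pm_def by auto
  have tM: "transpose_mat M \<in> carrier_mat D m" and tP: "transpose_mat Pm \<in> carrier_mat m D"
    using M Pc by auto
  have v: "v \<in> carrier_vec m" unfolding v_def Pm_def[symmetric] using tP by auto
  have Mv: "transpose_mat M *\<^sub>v v = ones_vec D"
  proof -
    have "transpose_mat M *\<^sub>v v = transpose_mat M *\<^sub>v (transpose_mat Pm *\<^sub>v (transpose_mat M *\<^sub>v z))"
      unfolding v_def Pm_def Mz ..
    also have "\<dots> = (transpose_mat M * (transpose_mat Pm * transpose_mat M)) *\<^sub>v z"
      using assoc_mult_mat_vec[OF tP tM z] assoc_mult_mat_vec[OF tM "mult_carrier_mat"[OF tP tM] z] by simp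
    also have "transpose_mat M * (transpose_mat Pm * transpose_mat M) = transpose_mat (M * Pm * M)"
      using transpose_mult[OF "mult_carrier_mat"[OF M Pc] M] transpose_mult[OF M Pc] by simp
    also have "\<dots> = transpose_mat M" using MPM by simp
    finally show ?thesis using Mz by simp
  qed
  have vv: "v \<bullet> v \<noteq> 0"
  proof
    assume "v \<bullet> v = 0"
    then have "v = 0\<^sub>v m" using self_prod_zero[of v] v by simp
    then have "transpose_mat M *\<^sub>v v = 0\<^sub>v D" using tM by (intro eq_vecI) auto
    then have "ones_vec D $ 0 = (0\<^sub>v D :: real vec) $ 0" using Mv by simp
    then show False using Dpos by simp
  qed
  define c where "c = 1 / (v \<bullet> v)"
  have wn: "wn \<in> carrier_vec m" using v unfolding wn_def by simp
  have wn_i: "wn $ i = c * v $ i" if "i < m" for i using that v unfolding wn_def c_def by simp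
  have Mwn: "(\<Sum>i<m. M $$ (i,j) * wn $ i) = c" if j: "j < D" for j
  proof -
    have "(transpose_mat M *\<^sub>v v) $ j = (\<Sum>i<m. transpose_mat M $$ (j,i) * v $ i)"
      using tM v j by (intro mult_vec_entry) auto
    also have "\<dots> = (\<Sum>i<m. M $$ (i,j) * v $ i)" using M j by (intro sum.cong) auto
    finally have "(\<Sum>i<m. M $$ (i,j) * v $ i) = 1" using Mv j by simp
    then have "c * (\<Sum>i<m. M $$ (i,j) * v $ i) = c" by simp
    then show ?thesis by (simp add: sum_distrib_left wn_i mult_ac)
  qed
  have wnwn: "(\<Sum>i<m. wn $ i * wn $ i) = c"
  proof -
    have "(\<Sum>i<m. wn $ i * wn $ i) = c * c * (\<Sum>i<m. v $ i * v $ i)"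
      by (simp add: wn_i sum_distrib_left mult_ac)
    also have "(\<Sum>i<m. v $ i * v $ i) = v \<bullet> v" using v by (simp add: scalar_prod_def atLeast0LessThan)
    finally show ?thesis using vv unfolding c_def by simp
  qed
  have WG: "(\<Sum>l<k. Ws $$ (i,l) * G $$ (j,l)) = M $$ (i,j) - wn $ i" if "i < m" "j < D" for i j
  proof -
    have "(Ws * transpose_mat G) $$ (i,j) = (\<Sum>l<k. Ws $$ (i,l) * transpose_mat G $$ (l,j))"
      using Ws G that by (intro mult_entry) auto
    also have "\<dots> = (\<Sum>l<k. Ws $$ (i,l) * G $$ (j,l))" using G that by (intro sum.cong) auto
    finally have e: "(Ws * transpose_mat G) $$ (i,j) = (\<Sum>l<k. Ws $$ (i,l) * G $$ (j,l))" .
    have "(M - outer wn (ones_vec D)) $$ (i,j) = M $$ (i,j) - wn $ i"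
      using M wn that by simp
    then show ?thesis using e unfolding fact by simp
  qed
  define y0 where "y0 = transpose_mat Ws *\<^sub>v wn"
  have y0: "y0 \<in> carrier_vec k" unfolding y0_def by (intro carrier_vecI) (use Ws in simp)
  have y0_l: "y0 $ l = (\<Sum>i<m. Ws $$ (i,l) * wn $ i)" if "l < k" for l
  proof -
    have "y0 $ l = (\<Sum>i<m. transpose_mat Ws $$ (l,i) * wn $ i)"
      unfolding y0_def using Ws wn that by (intro mult_vec_entry) auto
    also have "\<dots> = (\<Sum>i<m. Ws $$ (i,l) * wn $ i)" using Ws that by (intro sum.cong) auto
    finally show ?thesis .
  qed
  have Gy0: "(\<Sum>l<k. y0 $ l * G $$ (j,l)) = 0" if j: "j < D" for j
  proof -
    have "(\<Sum>l<k. y0 $ l * G $$ (j,l)) = (\<Sum>l<k. \<Sum>i<m. wn $ i * (Ws $$ (i,l) * G $$ (j,l)))"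
    proof (intro sum.cong refl)
      fix l assume "l \<in> {..<k}"
      then have "y0 $ l * G $$ (j,l) = (\<Sum>i<m. Ws $$ (i,l) * wn $ i) * G $$ (j,l)" using y0_l by simp
      also have "\<dots> = (\<Sum>i<m. Ws $$ (i,l) * wn $ i * G $$ (j,l))" by (rule sum_distrib_right)
      also have "\<dots> = (\<Sum>i<m. wn $ i * (Ws $$ (i,l) * G $$ (j,l)))" by (intro sum.cong refl) (simp only: mult_ac)
      finally show "y0 $ l * G $$ (j,l) = (\<Sum>i<m. wn $ i * (Ws $$ (i,l) * G $$ (j,l)))" .
    qed
    also have "\<dots> = (\<Sum>i<m. wn $ i * (\<Sum>l<k. Ws $$ (i,l) * G $$ (j,l)))"
      by (subst sum.swap) (simp add: sum_distrib_left)
    also have "\<dots> = (\<Sum>i<m. M $$ (i,j) * wn $ i - wn $ i * wn $ i)"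
    proof (intro sum.cong refl)
      fix i assume "i \<in> {..<m}"
      then have "wn $ i * (\<Sum>l<k. Ws $$ (i,l) * G $$ (j,l)) = wn $ i * (M $$ (i,j) - wn $ i)"
        using WG j by simp
      then show "wn $ i * (\<Sum>l<k. Ws $$ (i,l) * G $$ (j,l)) = M $$ (i,j) * wn $ i - wn $ i * wn $ i"
        by (simp add: right_diff_distrib mult.commute)
    qed
    also have "\<dots> = 0" using Mwn[OF j] wnwn by (simp add: sum_subtractf)
    finally show ?thesis .
  qed
  have y00: "y0 = 0\<^sub>v k"
  proof (rule ccontr)
    assume nz: "y0 \<noteq> 0\<^sub>v k"
    have "\<exists>p<k. y0 $ p \<noteq> 0"
    proof (rule ccontr)
      assume "\<not> (\<exists>p<k. y0 $ p \<noteq> 0)"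
      then have "y0 = 0\<^sub>v k" using y0 by (intro eq_vecI) auto
      then show False using nz by simp
    qed
    then obtain p where p: "p < k" "y0 $ p \<noteq> 0" by blast
    have "vec_space.rank m M \<le> card {..<Suc k} - 1"
    proof (rule rank_dep[OF _ M, of _ "\<lambda>q i. if q < k then Ws $$ (i,q) else wn $ i"
          "\<lambda>q j. if q < k then G $$ (j,q) else 1" "\<lambda>q. if q < k then y0 $ q else 0" p])
      fix i j assume ij: "i < m" "j < D"
      show "M $$ (i,j) = (\<Sum>q\<in>{..<Suc k}. (if q < k then Ws $$ (i,q) else wn $ i) * (if q < k then G $$ (j,q) else 1))"
        using WG[OF ij] by (simp add: lessThan_Suc)
    next
      fix j assume j: "j < D"
      show "(\<Sum>q\<in>{..<Suc k}. (if q < k then y0 $ q else 0) * (if q < k then G $$ (j,q) else 1)) = 0"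
        using Gy0[OF j] by (simp add: lessThan_Suc)
    qed (use p in auto)
    then show False using rk by simp
  qed
  have "orth_to_span wn Ws"
    unfolding orth_to_span_def col_span_def
  proof (intro ballI)
    fix x assume "x \<in> {Ws *\<^sub>v y |y. y \<in> carrier_vec (dim_col Ws)}"
    then obtain y where x: "x = Ws *\<^sub>v y" and y: "y \<in> carrier_vec k" using Ws by auto
    have "wn \<bullet> (Ws *\<^sub>v y) = (transpose_mat Ws *\<^sub>v wn) \<bullet> y"
      using transpose_vec_mult_scalar[OF Ws y wn] by simp
    also have "\<dots> = 0" using y00 y unfolding y0_def by simp
    finally show "wn \<bullet> x = 0" using x by simp
  qed
  then show ?thesis using wn by simp
qed

lemma orthn_mono: "orthn N K U \<Longrightarrow> K' \<subseteq> K \<Longrightarrow> orthn N K' U"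
  unfolding orthn_def by blast

lemma orth_rows_orthn:
  fixes V :: "real mat"
  assumes V: "V \<in> carrier_mat D D" and VV: "V * transpose_mat V = 1\<^sub>m D"
  shows "orthn D {..<D} (\<lambda>i a. V $$ (a,i))"
  unfolding orthn_def
proof (intro ballI)
  fix a b assume a: "a \<in> {..<D}" and b: "b \<in> {..<D}"
  have "(V * transpose_mat V) $$ (a,b) = (\<Sum>i<D. V $$ (a,i) * transpose_mat V $$ (i,b))"
    using V a b by (intro mult_entry) auto
  also have "\<dots> = (\<Sum>i<D. V $$ (a,i) * V $$ (b,i))"
    using V a b by (intro sum.cong) auto
  finally show "(\<Sum>i<D. V $$ (a,i) * V $$ (b,i)) = (if a = b then 1 else 0)"
    using VV a b by simp
qed

theorem theorem1:
  fixes W :: "real mat" and m D k :: nat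
    and U S V :: "real mat" and Ws_new G_new :: "real mat"
  assumes W_dim: "W \<in> carrier_mat m D"
    and kD: "k < D" and km: "k < m"
    and svd: "is_svd (W - outer ((1 / real D) \<cdot>\<^sub>v (W *\<^sub>v ones_vec D)) (ones_vec D)) U S V"
    and rankM: "mat_rank (outer ((1 / real D) \<cdot>\<^sub>v (W *\<^sub>v ones_vec D)) (ones_vec D)
                   + (first_cols k U * lead_block k S) * transpose_mat (first_cols k V)) = k + 1"
    and Ws_dim: "Ws_new \<in> carrier_mat m k" and G_dim: "G_new \<in> carrier_mat D k"
    and fact: "let wc = (1 / real D) \<cdot>\<^sub>v (W *\<^sub>v ones_vec D);
                   M = outer wc (ones_vec D) + (first_cols k U * lead_block k S) * transpose_mat (first_cols k V);
                   v = transpose_mat (pinv M) *\<^sub>v ones_vec D;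
                   wc_new = (1 / (v \<bullet> v)) \<cdot>\<^sub>v v
               in Ws_new * transpose_mat G_new = M - outer wc_new (ones_vec D)"
  shows "let wc = (1 / real D) \<cdot>\<^sub>v (W *\<^sub>v ones_vec D);
             M = outer wc (ones_vec D) + (first_cols k U * lead_block k S) * transpose_mat (first_cols k V);
             v = transpose_mat (pinv M) *\<^sub>v ones_vec D;
             wc_new = (1 / (v \<bullet> v)) \<cdot>\<^sub>v v
         in orth_to_span wc_new Ws_new \<and>
            obj W wc_new Ws_new G_new = frob_sq (W - M) \<and>
            (\<forall>wc' Ws' G'. wc' \<in> carrier_vec m \<longrightarrow> Ws' \<in> carrier_mat m k \<longrightarrow> G' \<in> carrier_mat D k \<longrightarrow>
                orth_to_span wc' Ws' \<longrightarrow> frob_sq (W - M) \<le> obj W wc' Ws' G')"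
proof -
  define wc where "wc = (1 / real D) \<cdot>\<^sub>v (W *\<^sub>v ones_vec D)"
  define L where "L = first_cols k U * lead_block k S * transpose_mat (first_cols k V)"
  define M where "M = outer wc (ones_vec D) + L"
  define v where "v = transpose_mat (pinv M) *\<^sub>v ones_vec D"
  define wn where "wn = (1 / (v \<bullet> v)) \<cdot>\<^sub>v v"
  have fact': "Ws_new * transpose_mat G_new = M - outer wn (ones_vec D)"
    using fact unfolding Let_def wc_def L_def M_def v_def wn_def .
  have Dpos: "0 < D" using kD by simp
  have wc: "wc \<in> carrier_vec m" unfolding wc_def using W_dim by simp
  have wc_i: "wc $ i = (\<Sum>j<D. W $$ (i,j)) / real D" if "i < m" for i
  proof -
    have "(W *\<^sub>v ones_vec D) $ i = (\<Sum>j<D. W $$ (i,j) * ones_vec D $ j)"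
      using W_dim that by (intro mult_vec_entry) auto
    then show ?thesis unfolding wc_def using W_dim that by simp
  qed
  define A where "A = W - outer wc (ones_vec D)"
  have A: "A \<in> carrier_mat m D" unfolding A_def using W_dim wc by auto
  have svd': "is_svd A U S V" using svd unfolding A_def wc_def .
  have dA: "dim_row A = m" "dim_col A = D" using A by auto
  have U: "U \<in> carrier_mat m m" and UU: "transpose_mat U * U = 1\<^sub>m m"
    and V: "V \<in> carrier_mat D D" and VV: "transpose_mat V * V = 1\<^sub>m D"
    and S: "S \<in> carrier_mat m D"
    and diag: "\<And>i j. i < m \<Longrightarrow> j < D \<Longrightarrow> i \<noteq> j \<Longrightarrow> S $$ (i,j) = 0"
    and snn: "\<And>i. i < min m D \<Longrightarrow> S $$ (i,i) \<ge> 0"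
    and smono: "\<And>i j. i \<le> j \<Longrightarrow> j < min m D \<Longrightarrow> S $$ (j,j) \<le> S $$ (i,i)"
    and Ausv: "A = U * S * transpose_mat V"
    using svd' unfolding is_svd_def orthogonal_sq_def dA by auto
  have VVt: "V * transpose_mat V = 1\<^sub>m D"
    using mat_mult_left_right_inverse[of "transpose_mat V" D V] V VV by simp
  define n where "n = min m D"
  have kn: "k \<le> n" using km kD unfolding n_def by simp
  have nD: "n \<le> D" unfolding n_def by simp
  have oU: "orthn m {..<m} (\<lambda>i j. U $$ (i,j))" by (rule orth_to_orthn[OF U UU])
  have oV: "orthn D {..<D} (\<lambda>i j. V $$ (i,j))" by (rule orth_to_orthn[OF V VV])
  have oVr: "orthn D {..<D} (\<lambda>i a. V $$ (a,i))" by (rule orth_rows_orthn[OF V VVt])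
  have oUn: "orthn m {..<n} (\<lambda>i j. U $$ (i,j))" using orthn_mono[OF oU] unfolding n_def by auto
  have oVn: "orthn D {..<n} (\<lambda>i j. V $$ (i,j))" using orthn_mono[OF oV] unfolding n_def by auto
  have oUk: "orthn m {..<k} (\<lambda>i j. U $$ (i,j))" using orthn_mono[OF oU] km by auto
  have Aentry: "W $$ (i,j) - wc $ i = (\<Sum>q<n. S $$ (q,q) * U $$ (i,q) * V $$ (j,q))"
    if ij: "i < m" "j < D" for i j
  proof -
    have "A $$ (i,j) = W $$ (i,j) - wc $ i" unfolding A_def using W_dim wc ij by simp
    moreover have "A $$ (i,j) = (\<Sum>q<n. S $$ (q,q) * U $$ (i,q) * V $$ (j,q))"
      unfolding Ausv n_def by (rule usv_entry[OF U S V diag ij])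
    ultimately show ?thesis by simp
  qed
  have L: "L \<in> carrier_mat m D" unfolding L_def by (intro carrier_matI) (use U V in \<open>auto simp: first_cols_def lead_block_def\<close>)
  have Lentry: "L $$ (i,j) = (\<Sum>q<k. S $$ (q,q) * U $$ (i,q) * V $$ (j,q))" if ij: "i < m" "j < D" for i j
    unfolding L_def by (rule trunc_entry[OF U S V diag _ _ ij]) (use km kD in auto)
  have M: "M \<in> carrier_mat m D" unfolding M_def using wc L by auto
  have Mentry: "M $$ (i,j) = wc $ i + (\<Sum>q<k. S $$ (q,q) * U $$ (i,q) * V $$ (j,q))"
    if ij: "i < m" "j < D" for i j
    unfolding M_def using ij wc L Lentry[OF ij] by simp
  have WM: "W - M \<in> carrier_mat m D" using W_dim M by auto
  have WMentry: "(W - M) $$ (i,j) = (\<Sum>q\<in>{k..<n}. S $$ (q,q) * U $$ (i,q) * V $$ (j,q))"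
    if ij: "i < m" "j < D" for i j
  proof -
    have un: "{..<n} = {..<k} \<union> {k..<n}" using kn by auto
    have "(\<Sum>q<n. S $$ (q,q) * U $$ (i,q) * V $$ (j,q))
        = (\<Sum>q<k. S $$ (q,q) * U $$ (i,q) * V $$ (j,q)) + (\<Sum>q\<in>{k..<n}. S $$ (q,q) * U $$ (i,q) * V $$ (j,q))"
      unfolding un by (rule sum.union_disjoint) auto
    then show ?thesis using Aentry[OF ij] Mentry[OF ij] W_dim M ij by simp
  qed
  have frobWM: "frob_sq (W - M) = (\<Sum>q\<in>{k..<n}. (S $$ (q,q))^2)"
  proof -
    have "frob_sq (W - M) = (\<Sum>i<m. \<Sum>j<D. (\<Sum>q\<in>{k..<n}. S $$ (q,q) * U $$ (i,q) * V $$ (j,q))^2)"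
      by (rule frob_sq_entries[OF WM WMentry])
    also have "\<dots> = (\<Sum>q\<in>{k..<n}. (S $$ (q,q))^2)"
      by (rule frob_svd_like[OF orthn_mono[OF oUn] orthn_mono[OF oVn]]) auto
    finally show ?thesis .
  qed
  have rk0: "mat_rank M = k + 1"
    using rankM unfolding M_def L_def wc_def .
  have rk: "vec_space.rank m M = k + 1"
    using rk0 M unfolding mat_rank_def by simp
  obtain z where P: "is_pinv M (pinv M)" and z: "z \<in> carrier_vec m" and Mz: "transpose_mat M *\<^sub>v z = ones_vec D"
    using M_pinv[OF M rk wc oUk Mentry] by blast
  have orth: "orth_to_span wn Ws_new" and wn: "wn \<in> carrier_vec m"
    using orth_new[OF M Dpos rk P z Mz Ws_dim G_dim v_def wn_def fact'] by auto
  have objnew: "obj W wn Ws_new G_new = frob_sq (W - M)"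
  proof -
    have "W - outer wn (ones_vec (dim_col W)) - Ws_new * transpose_mat G_new = W - M"
      unfolding fact' using W_dim wn M by (intro eq_matI) auto
    then show ?thesis unfolding obj_def by simp
  qed
  have lower: "frob_sq (W - M) \<le> obj W wc' Ws' G'"
    if wc': "wc' \<in> carrier_vec m" and Ws': "Ws' \<in> carrier_mat m k" and G': "G' \<in> carrier_mat D k" for wc' Ws' G'
  proof -
    have R: "W - outer wc' (ones_vec (dim_col W)) - Ws' * transpose_mat G' \<in> carrier_mat m D"
      using W_dim wc' Ws' G' by auto
    have Rentry: "(W - outer wc' (ones_vec (dim_col W)) - Ws' * transpose_mat G') $$ (i,j)
        = W $$ (i,j) - wc' $ i - (\<Sum>l<k. Ws' $$ (i,l) * G' $$ (j,l))" if ij: "i < m" "j < D" for i j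
    proof -
      have "(Ws' * transpose_mat G') $$ (i,j) = (\<Sum>l<k. Ws' $$ (i,l) * transpose_mat G' $$ (l,j))"
        using Ws' G' ij by (intro mult_entry) auto
      also have "\<dots> = (\<Sum>l<k. Ws' $$ (i,l) * G' $$ (j,l))" using G' ij by (intro sum.cong) auto
      finally show ?thesis using W_dim wc' Ws' G' ij by simp
    qed
    have "obj W wc' Ws' G' = (\<Sum>i<m. \<Sum>j<D. (W $$ (i,j) - wc' $ i - (\<Sum>l<k. Ws' $$ (i,l) * G' $$ (j,l)))^2)"
      unfolding obj_def by (rule frob_sq_entries[OF R Rentry])
    moreover have "(\<Sum>q\<in>{k..<n}. (S $$ (q,q))^2)
        \<le> (\<Sum>i<m. \<Sum>j<D. (W $$ (i,j) - wc' $ i - (\<Sum>l<k. Ws' $$ (i,l) * G' $$ (j,l)))^2)"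
    proof (rule lower_bound_fl[OF oUn oVn oVr nD Dpos])
      show "\<And>q. q < n \<Longrightarrow> 0 \<le> S $$ (q,q)" using snn unfolding n_def by auto
      show "\<And>i j. i \<le> j \<Longrightarrow> j < n \<Longrightarrow> S $$ (j,j) \<le> S $$ (i,i)" using smono unfolding n_def by auto
      fix i j assume ij: "i < m" "j < D"
      show "W $$ (i,j) - (\<Sum>j'<D. W $$ (i,j')) / real D = (\<Sum>q<n. S $$ (q,q) * U $$ (i,q) * V $$ (j,q))"
        using Aentry[OF ij] wc_i[OF ij(1)] by simp
    qed
    ultimately show ?thesis using frobWM by simp
  qed
  have "orth_to_span wn Ws_new \<and> obj W wn Ws_new G_new = frob_sq (W - M) \<and>
        (\<forall>wc' Ws' G'. wc' \<in> carrier_vec m \<longrightarrow> Ws' \<in> carrier_mat m k \<longrightarrow> G' \<in> carrier_mat D k \<longrightarrow>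
            orth_to_span wc' Ws' \<longrightarrow> frob_sq (W - M) \<le> obj W wc' Ws' G')"
    using orth objnew lower by blast
  then show ?thesis unfolding Let_def wc_def[symmetric] L_def[symmetric] M_def[symmetric] v_def[symmetric] wn_def[symmetric] .
qed


end
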